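(* Let the random permutation $\sigma$ be uniformly distributed on the symmetric group $S_N$, and let $l\ge 1$ be an integer. Then $$\mathrm{Ex}\big[C_\sigma^{\underline{l}}\big] = (-1)^l\, Z_l\big(-\zeta_N(1), -\zeta_N(2), \ldots, -\zeta_N(l)\big),$$ where $$Z_l(g_1,\ldots,g_l) = \sum_{\substack{n_1\ge0,\ldots,n_l\ge 0\\ n_1+2n_2+\cdots+ln_l=l}} \frac{l!\, g_1^{n_1}g_2^{n_2}\cdots g_l^{n_l}}{n_1!\,1^{n_1}\, n_2!\,2^{n_2}\cdots n_l!\,l^{n_l}}$$ and $\zeta_N(m)=\sum_{1\le n\le N} n^{-m}$.
   Context: For a permutation $\pi$ of $\{1,\ldots,N\}$, $C_\pi$ denotes the number of cycles of $\pi$; $\mathrm{Ex}$ denotes expectation. For a real number $x$, $x^{\underline{l}}=x(x-1)\cdots(x-l+1)$ denotes the $l$-th falling power. *)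

theory Defs
  imports "HOL-Probability.Probability" "HOL-Combinatorics.Orbits"
begin

definition falling_pow :: "real \<Rightarrow> nat \<Rightarrow> real" where
  "falling_pow x l = (\<Prod>i<l. (x - real i))"

text \<open>Number of cycles of a permutation of {1..N} (fixed points count as cycles):
  the number of distinct orbits.\<close>
definition num_cycles :: "nat \<Rightarrow> (nat \<Rightarrow> nat) \<Rightarrow> nat" where
  "num_cycles N \<pi> = card (orbit \<pi> ` {1..N})"

definition zetaN :: "nat \<Rightarrow> nat \<Rightarrow> real" where
  "zetaN N m = (\<Sum>n=1..N. 1 / real n ^ m)"

text \<open>Cycle index polynomial Z_l(g_1,...,g_l); tuples (n_1,...,n_l) are functions on {1..l}
  (each n_i \<le> l is automatic from the constraint).\<close>
definition Zpoly :: "nat \<Rightarrow> (nat \<Rightarrow> real) \<Rightarrow> real" where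
  "Zpoly l g = (\<Sum>n \<in> {n \<in> {1..l} \<rightarrow>\<^sub>E {..l}. (\<Sum>i=1..l. i * n i) = l}.
      fact l * (\<Prod>i=1..l. g i ^ n i) / (\<Prod>i=1..l. fact (n i) * real i ^ n i))"

end

theory Submission
  imports Defs "HOL-Computational_Algebra.Formal_Power_Series"
begin

unbundle no vec_syntax
notation fps_nth (infixl \<open>$\<close> 75)


lemma card_image_same_kernel:
  assumes "\<And>x y. x \<in> A \<Longrightarrow> y \<in> A \<Longrightarrow> (f x = f y) = (g x = g y)"
  shows "card (f ` A) = card (g ` A)"
proof -
  define h where "h = (\<lambda>X. g (inv_into A f X))"
  have hx: "h (f x) = g x" if "x \<in> A" for x
  proof -
    have "inv_into A f (f x) \<in> A" "f (inv_into A f (f x)) = f x"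
      using that by (auto intro: inv_into_into f_inv_into_f)
    then show ?thesis unfolding h_def using assms that by blast
  qed
  have "h ` (f ` A) = g ` A" using hx by (auto simp: image_image)
  moreover have "inj_on h (f ` A)"
    by (auto simp: inj_on_def hx assms)
  ultimately show ?thesis by (metis card_image)
qed

lemma perm_orbit_eq_iff:
  assumes "permutation f"
  shows "(orbit f x = orbit f y) = (y \<in> orbit f x)"
  by (metis assms cyclic_on_orbit' orbit_cyclic_eq3 permutation_self_in_orbit)

context
  fixes S a b \<tau>
  assumes fin: "finite S" and aS: "a \<notin> S" and bS: "b \<in> S" and tau: "\<tau> permutes S"
begin

private abbreviation "\<sigma> \<equiv> Transposition.transpose a b \<circ> \<tau>"

private lemma tau_a: "\<tau> a = a" using tau aS by (simp add: permutes_not_in)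

private lemma sig_a: "\<sigma> a = b" using tau_a by simp

private lemma sig_S: "z \<in> S \<Longrightarrow> \<sigma> z = (if \<tau> z = b then a else \<tau> z)"
proof -
  assume z: "z \<in> S"
  have "\<tau> z \<in> S" using tau z by (simp add: permutes_in_image)
  then have "\<tau> z \<noteq> a" using aS by auto
  then show ?thesis by (auto simp: Transposition.transpose_def)
qed

private lemma tauS: "z \<in> S \<Longrightarrow> \<tau> z \<in> S" using tau by (simp add: permutes_in_image)

lemma orbit_transpose_fwd:
  assumes x: "x \<in> S" and y: "y \<in> orbit \<tau> x"
  shows "y \<in> orbit \<sigma> x"
  using y
proof induction
  case base
  show ?case
  proof (cases "\<tau> x = b")
    case True
    then have "\<sigma> x = a" using sig_S x by simp
    then have "a \<in> orbit \<sigma> x" by (metis orbit.base)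
    then have "\<sigma> a \<in> orbit \<sigma> x" by (rule orbit.step)
    then show ?thesis using True sig_a by metis
  next
    case False
    then show ?thesis using sig_S[OF x] by (metis orbit.base)
  qed
next
  case (step y)
  have yS: "y \<in> S" using step.hyps permutes_orbit_subset[OF tau x] by auto
  show ?case
  proof (cases "\<tau> y = b")
    case True
    then have "\<sigma> y = a" using sig_S yS by simp
    then have "a \<in> orbit \<sigma> x" using step.IH by (metis orbit.step)
    then have "\<sigma> a \<in> orbit \<sigma> x" by (rule orbit.step)
    then show ?thesis using True sig_a by metis
  next
    case False
    then show ?thesis using sig_S[OF yS] step.IH by (metis orbit.step)
  qed
qed

lemma orbit_transpose_bwd:
  assumes x: "x \<in> S" and y: "y \<in> orbit \<sigma> x"
  shows "y \<in> insert a S \<and> (y \<in> S \<longrightarrow> y \<in> orbit \<tau> x) \<and> (y = a \<longrightarrow> b \<in> orbit \<tau> x)"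
  using y
proof induction
  case base
  show ?case
  proof (cases "\<tau> x = b")
    case True
    then have "\<sigma> x = a" using sig_S x by simp
    then show ?thesis using True aS by (metis insertI1 orbit.base)
  next
    case False
    then show ?thesis using sig_S[OF x] tauS[OF x] aS by (auto intro: orbit.base)
  qed
next
  case (step y)
  show ?case
  proof (cases "y = a")
    case True
    then show ?thesis using step.IH sig_a bS aS by auto
  next
    case False
    then have yS: "y \<in> S" using step.IH by auto
    then have yo: "y \<in> orbit \<tau> x" using step.IH by auto
    show ?thesis
    proof (cases "\<tau> y = b")
      case True
      then show ?thesis using sig_S[OF yS] yo aS by (auto intro: orbit.step)
    next
      case False
      then show ?thesis using sig_S[OF yS] yo tauS[OF yS] aS by (auto intro: orbit.step)
    qed
  qed
qed

lemma card_orbits_transpose: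
  "card (orbit \<sigma> ` insert a S) = card (orbit \<tau> ` S)"
proof -
  have pt: "permutation \<tau>" using tau fin by (rule permutes_imp_permutation[rotated])
  have ps: "permutation \<sigma>" using pt by (simp add: permutation_compose permutation_swap_id)
  have "orbit \<sigma> a = orbit \<sigma> b"
    using perm_orbit_eq_iff[OF ps, of a b] sig_a by (metis orbit.base)
  then have "orbit \<sigma> ` insert a S = orbit \<sigma> ` S" using bS by auto
  moreover have "card (orbit \<sigma> ` S) = card (orbit \<tau> ` S)"
  proof (rule card_image_same_kernel)
    fix x y assume x: "x \<in> S" and y: "y \<in> S"
    show "(orbit \<sigma> x = orbit \<sigma> y) = (orbit \<tau> x = orbit \<tau> y)"
      unfolding perm_orbit_eq_iff[OF ps] perm_orbit_eq_iff[OF pt]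
      using orbit_transpose_fwd[OF x] orbit_transpose_bwd[OF x] y by blast
  qed
  ultimately show ?thesis by simp
qed

end

lemma card_orbits_insert_fixed:
  assumes fin: "finite S" and aS: "a \<notin> S" and tau: "\<tau> permutes S"
  shows "card (orbit \<tau> ` insert a S) = Suc (card (orbit \<tau> ` S))"
proof -
  have "\<tau> a = a" using tau aS by (simp add: permutes_not_in)
  then have oa: "orbit \<tau> a = {a}" by (simp add: orbit_eq_singleton_iff)
  have "orbit \<tau> a \<notin> orbit \<tau> ` S"
    using permutes_orbit_subset[OF tau] aS oa by blast
  then show ?thesis using fin by simp
qed



definition BB :: "nat \<Rightarrow> nat \<Rightarrow> (nat \<Rightarrow> nat) set" where
  "BB M l = {n \<in> {1..M} \<rightarrow>\<^sub>E {..l}. (\<Sum>i=1..M. i * n i) = l}"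

definition TT :: "(nat \<Rightarrow> real) \<Rightarrow> nat \<Rightarrow> (nat \<Rightarrow> nat) \<Rightarrow> real" where
  "TT g M n = (\<Prod>i=1..M. g i ^ n i / (fact (n i) * real i ^ n i))"

definition ZZ :: "(nat \<Rightarrow> real) \<Rightarrow> nat \<Rightarrow> nat \<Rightarrow> real" where
  "ZZ g M l = (\<Sum>n\<in>BB M l. TT g M n)"

lemma finite_BB: "finite (BB M l)"
  unfolding BB_def by (rule finite_subset[of _ "{1..M} \<rightarrow>\<^sub>E {..l}"]) (auto intro: finite_PiE)

lemma Zpoly_ZZ: "Zpoly l g = fact l * ZZ g l l"
  unfolding Zpoly_def ZZ_def BB_def TT_def
  by (simp add: sum_distrib_left prod_dividef)

lemma BB_le: "n \<in> BB M l \<Longrightarrow> j \<in> {1..M} \<Longrightarrow> j * n j \<le> l"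
  unfolding BB_def
  by (auto intro!: member_le_sum)

lemma BB_le2: "n \<in> BB M l \<Longrightarrow> j \<in> {1..M} \<Longrightarrow> n j \<le> l"
  using BB_le[of n M l j] by (auto intro: order_trans[of _ "j * n j"])

lemma ZZ_restrict:
  assumes "l \<le> M"
  shows "ZZ g M l = ZZ g l l"
proof -
  define e where "e = (\<lambda>m::nat\<Rightarrow>nat. \<lambda>j. if j \<in> {1..l} then m j else if j \<in> {1..M} then 0 else undefined)"
  have zero: "n j = 0" if "n \<in> BB M l" "j \<in> {1..M}" "j \<notin> {1..l}" for n j
  proof (rule ccontr)
    assume "n j \<noteq> 0"
    then have "j \<le> j * n j" by simp
    also have "\<dots> \<le> l" using BB_le that by blast
    finally show False using that by auto
  qed
  have sumeq: "(\<Sum>i=1..M. i * f i) = (\<Sum>i=1..l. i * f i)" if "\<And>j. j \<in> {1..M} \<Longrightarrow> j \<notin> {1..l} \<Longrightarrow> f j = 0" for f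
    by (rule sum.mono_neutral_right) (use assms that in auto)
  have prodeq: "TT g M f = TT g l f" if "\<And>j. j \<in> {1..M} \<Longrightarrow> j \<notin> {1..l} \<Longrightarrow> f j = 0" for f
    unfolding TT_def by (rule prod.mono_neutral_right) (use assms that in auto)
  show ?thesis
    unfolding ZZ_def
  proof (rule sum.reindex_bij_witness[of _ e "\<lambda>n. restrict n {1..l}"])
    fix n assume n: "n \<in> BB M l"
    show "e (restrict n {1..l}) = n"
      using zero[OF n] n assms unfolding e_def BB_def
      by (auto simp: fun_eq_iff PiE_def extensional_def)
    show "restrict n {1..l} \<in> BB l l"
      using n zero[OF n] sumeq[of n] assms unfolding BB_def by (auto simp: PiE_def)
    show "TT g l (restrict n {1..l}) = TT g M n"
      using prodeq[of n] zero[OF n] unfolding TT_def by simp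
  next
    fix m assume m: "m \<in> BB l l"
    show "restrict (e m) {1..l} = m"
      using m unfolding e_def BB_def by (auto simp: fun_eq_iff PiE_def extensional_def)
    have "(\<Sum>i=1..M. i * e m i) = (\<Sum>i=1..l. i * e m i)"
      by (rule sumeq) (auto simp: e_def)
    also have "\<dots> = (\<Sum>i=1..l. i * m i)" by (rule sum.cong) (auto simp: e_def)
    finally show "e m \<in> BB M l"
      using m assms unfolding BB_def by (auto simp: e_def PiE_def extensional_def)
  qed
qed

lemma sum_upd_split:
  assumes "finite A" "i \<in> A"
  shows "(\<Sum>j\<in>A. F j ((f(i := x)) j)) = F i x + (\<Sum>j\<in>A-{i}. F j (f j))"
  using assms by (simp add: sum.remove)

lemma prod_upd_split:
  assumes "finite A" "i \<in> A"
  shows "(\<Prod>j\<in>A. F j ((f(i := x)) j)) = F i x * (\<Prod>j\<in>A-{i}. F j (f j))"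
  using assms by (simp add: prod.remove)

lemma ZZ_inner:
  assumes i: "i \<in> {1..M}"
  shows "(\<Sum>n\<in>BB M l. real i * real (n i) * TT g M n)
         = (if i \<le> l then g i * ZZ g M (l - i) else 0)"
proof -
  have "(\<Sum>n\<in>BB M l. real i * real (n i) * TT g M n) = (\<Sum>n\<in>{n\<in>BB M l. 0 < n i}. real i * real (n i) * TT g M n)"
    by (rule sum.mono_neutral_right) (auto simp: finite_BB)
  also have "\<dots> = (if i \<le> l then g i * ZZ g M (l - i) else 0)"
  proof (cases "i \<le> l")
    case False
    have "{n\<in>BB M l. 0 < n i} = {}"
    proof (safe)
      fix n assume "n \<in> BB M l" "0 < n i"
      then have "i \<le> i * n i" "i * n i \<le> l" using BB_le i by auto
      then show "n \<in> {}" using False by linarith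
    qed
    then show ?thesis using False by (simp only: sum.empty if_False)
  next
    case True
    let ?t = "\<lambda>j k. g j ^ k / (fact k * real j ^ k)"
    have tstep: "real i * real (Suc k) * ?t i (Suc k) = g i * ?t i k" for k
    proof -
      have A: "real i * real (Suc k) \<noteq> 0" using i by auto
      have eq: "fact (Suc k) * real i ^ Suc k = (real i * real (Suc k)) * (fact k * real i ^ k)"
        by (simp add: algebra_simps)
      have "real i * real (Suc k) * ?t i (Suc k)
          = (real i * real (Suc k)) * (g i * g i ^ k) / ((real i * real (Suc k)) * (fact k * real i ^ k))"
        by (simp only: eq power_Suc) simp
      also have "\<dots> = g i * ?t i k" using A by (subst mult_divide_mult_cancel_left) auto
      finally show ?thesis .
    qed
    have "(\<Sum>n\<in>{n\<in>BB M l. 0 < n i}. real i * real (n i) * TT g M n) = (\<Sum>m\<in>BB M (l - i). g i * TT g M m)"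
    proof (rule sum.reindex_bij_witness[of _ "\<lambda>m. m(i := Suc (m i))" "\<lambda>n. n(i := n i - 1)"])
      fix n assume n: "n \<in> {n\<in>BB M l. 0 < n i}"
      then show "n(i := n i - 1, i := Suc ((n(i := n i - 1)) i)) = n" by auto
      have s1: "(\<Sum>j=1..M. j * n j) = i * n i + (\<Sum>j\<in>{1..M}-{i}. j * n j)"
        using i by (simp add: sum.remove)
      have s2: "(\<Sum>j=1..M. j * (n(i := n i - 1)) j) = i * (n i - 1) + (\<Sum>j\<in>{1..M}-{i}. j * n j)"
        using sum_upd_split[of "{1..M}" i "\<lambda>j k. j * k" n "n i - 1"] i by simp
      have "i * n i = i * (n i - 1) + i" using n by (cases "n i") auto
      then have sumv: "(\<Sum>j=1..M. j * (n(i := n i - 1)) j) = l - i"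
        using s1 s2 n unfolding BB_def by auto
      have "\<forall>j\<in>{1..M}. (n(i := n i - 1)) j \<le> l - i"
      proof
        fix j assume j: "j \<in> {1..M}"
        have "j * (n(i := n i - 1)) j \<le> (\<Sum>j=1..M. j * (n(i := n i - 1)) j)"
          using j by (intro member_le_sum) auto
        then have "j * (n(i := n i - 1)) j \<le> l - i" using sumv by simp
        moreover have "(n(i := n i - 1)) j \<le> j * (n(i := n i - 1)) j" using j by simp
        ultimately show "(n(i := n i - 1)) j \<le> l - i" by linarith
      qed
      then show "n(i := n i - 1) \<in> BB M (l - i)"
        using n sumv i unfolding BB_def by (auto simp: PiE_def extensional_def)
      have p1: "TT g M n = ?t i (n i) * (\<Prod>j\<in>{1..M}-{i}. ?t j (n j))"
        unfolding TT_def using i by (simp add: prod.remove)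
      have p2: "TT g M (n(i := n i - 1)) = ?t i (n i - 1) * (\<Prod>j\<in>{1..M}-{i}. ?t j (n j))"
        unfolding TT_def using prod_upd_split[of "{1..M}" i ?t n "n i - 1"] i by simp
      have key: "real i * real (n i) * ?t i (n i) = g i * ?t i (n i - 1)"
        using tstep[of "n i - 1"] n by (cases "n i") auto
      let ?R = "(\<Prod>j\<in>{1..M}-{i}. ?t j (n j))"
      have "g i * TT g M (n(i := n i - 1)) = (g i * ?t i (n i - 1)) * ?R"
        unfolding p2 by (simp only: mult.assoc)
      also have "\<dots> = (real i * real (n i) * ?t i (n i)) * ?R" by (simp only: key)
      also have "\<dots> = real i * real (n i) * TT g M n" unfolding p1 by (simp only: mult.assoc)
      finally show "g i * TT g M (n(i := n i - 1)) = real i * real (n i) * TT g M n" .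
    next
      fix m assume m: "m \<in> BB M (l - i)"
      then show "m(i := Suc (m i), i := (m(i := Suc (m i))) i - 1) = m" by auto
      have s2: "(\<Sum>j=1..M. j * (m(i := Suc (m i))) j) = i * Suc (m i) + (\<Sum>j\<in>{1..M}-{i}. j * m j)"
        using sum_upd_split[of "{1..M}" i "\<lambda>j k. j * k" m "Suc (m i)"] i by simp
      have s1: "(\<Sum>j=1..M. j * m j) = i * m i + (\<Sum>j\<in>{1..M}-{i}. j * m j)"
        using i by (simp add: sum.remove)
      have sumv: "(\<Sum>j=1..M. j * (m(i := Suc (m i))) j) = l"
        using s1 s2 m True unfolding BB_def by auto
      have "\<forall>j\<in>{1..M}. (m(i := Suc (m i))) j \<le> l"
      proof
        fix j assume j: "j \<in> {1..M}"
        have "j * (m(i := Suc (m i))) j \<le> (\<Sum>j=1..M. j * (m(i := Suc (m i))) j)"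
          using j by (intro member_le_sum) auto
        then have "j * (m(i := Suc (m i))) j \<le> l" using sumv by simp
        moreover have "(m(i := Suc (m i))) j \<le> j * (m(i := Suc (m i))) j" using j by simp
        ultimately show "(m(i := Suc (m i))) j \<le> l" by linarith
      qed
      then show "m(i := Suc (m i)) \<in> {n\<in>BB M l. 0 < n i}"
        using m sumv i unfolding BB_def by (auto simp: PiE_def extensional_def)
    qed
    also have "\<dots> = g i * ZZ g M (l - i)" unfolding ZZ_def by (simp add: sum_distrib_left)
    finally show ?thesis using True by simp
  qed
  finally show ?thesis .
qed

lemma ZZ_rec:
  assumes "Suc k \<le> M"
  shows "real (Suc k) * ZZ g M (Suc k) = (\<Sum>i\<le>k. g (Suc i) * ZZ g M (k - i))"
proof -
  have "real (Suc k) * ZZ g M (Suc k) = (\<Sum>n\<in>BB M (Suc k). (\<Sum>i=1..M. real i * real (n i)) * TT g M n)"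
    unfolding ZZ_def sum_distrib_left
  proof (rule sum.cong[OF refl])
    fix n assume "n \<in> BB M (Suc k)"
    then have "real (Suc k) = real (\<Sum>i=1..M. i * n i)" unfolding BB_def by simp
    then show "real (Suc k) * TT g M n = (\<Sum>i=1..M. real i * real (n i)) * TT g M n" by simp
  qed
  also have "\<dots> = (\<Sum>i=1..M. \<Sum>n\<in>BB M (Suc k). real i * real (n i) * TT g M n)"
    by (simp add: sum_distrib_right sum.swap[of _ "BB M (Suc k)"])
  also have "\<dots> = (\<Sum>i=1..M. if i \<le> Suc k then g i * ZZ g M (Suc k - i) else 0)"
    by (rule sum.cong) (auto simp: ZZ_inner)
  also have "\<dots> = (\<Sum>i=1..Suc k. g i * ZZ g M (Suc k - i))"
    by (rule sum.mono_neutral_cong_right) (use assms in auto)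
  also have "\<dots> = (\<Sum>i=0..k. g (Suc i) * ZZ g M (Suc k - Suc i))"
    using sum.shift_bounds_cl_Suc_ivl[of "\<lambda>i. g i * ZZ g M (Suc k - i)" 0 k] by simp
  also have "\<dots> = (\<Sum>i\<le>k. g (Suc i) * ZZ g M (k - i))"
    by (simp add: atLeast0AtMost)
  finally show ?thesis .
qed

lemma Zpoly_rec:
  "real (Suc k) * (Zpoly (Suc k) g / fact (Suc k)) = (\<Sum>i\<le>k. g (Suc i) * (Zpoly (k - i) g / fact (k - i)))"
proof -
  have "Zpoly (Suc k) g / fact (Suc k) = ZZ g (Suc k) (Suc k)" by (simp add: Zpoly_ZZ)
  moreover have "Zpoly (k - i) g / fact (k - i) = ZZ g (Suc k) (k - i)" if "i \<le> k" for i
    using ZZ_restrict[of "k - i" "Suc k" g] by (simp add: Zpoly_ZZ)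
  ultimately show ?thesis using ZZ_rec[of k "Suc k" g] by simp
qed

lemma Zpoly_0: "Zpoly 0 g = 1"
  unfolding Zpoly_def by simp

lemma falling_pow_Suc_shift:
  "falling_pow (x + 1) (Suc l) = falling_pow x (Suc l) + real (Suc l) * falling_pow x l"
proof -
  have a: "falling_pow (x + 1) (Suc l) = (x + 1) * falling_pow x l"
    unfolding falling_pow_def by (subst prod.lessThan_Suc_shift) (simp add: algebra_simps)
  have b: "falling_pow x (Suc l) = falling_pow x l * (x - real l)"
    unfolding falling_pow_def by simp
  show ?thesis unfolding a b by (simp add: algebra_simps)
qed

lemma falling_pow_0: "falling_pow x 0 = 1" unfolding falling_pow_def by simp

lemma falling_pow_zero_Suc: "falling_pow 0 (Suc l) = 0"
  unfolding falling_pow_def by (subst prod.lessThan_Suc_shift) simp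

lemma falling_pow_Suc_shift':
  "falling_pow (1 + x) (Suc l) = falling_pow x (Suc l) + real (Suc l) * falling_pow x l"
  using falling_pow_Suc_shift[of x l] by (simp add: add.commute)

lemma sum_perms_Suc:
  fixes f :: "nat \<Rightarrow> real"
  shows "(\<Sum>\<sigma>\<in>{\<sigma>. \<sigma> permutes {1..Suc N}}. f (num_cycles (Suc N) \<sigma>))
       = (\<Sum>\<tau>\<in>{\<tau>. \<tau> permutes {1..N}}. f (Suc (num_cycles N \<tau>)) + real N * f (num_cycles N \<tau>))"
proof -
  let ?S = "{1..N}" and ?a = "Suc N"
  have ins: "{1..Suc N} = insert ?a ?S" by auto
  have aS: "?a \<notin> ?S" by simp
  have "(\<Sum>\<sigma>\<in>{\<sigma>. \<sigma> permutes {1..Suc N}}. f (num_cycles (Suc N) \<sigma>))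
      = (\<Sum>b\<in>insert ?a ?S. \<Sum>q\<in>{p. p permutes ?S}. f (card (orbit (Transposition.transpose ?a b \<circ> q) ` insert ?a ?S)))"
    unfolding ins num_cycles_def by (rule sum_over_permutations_insert) auto
  also have "\<dots> = (\<Sum>q\<in>{p. p permutes ?S}. f (card (orbit q ` insert ?a ?S)))
      + (\<Sum>b\<in>?S. \<Sum>q\<in>{p. p permutes ?S}. f (card (orbit (Transposition.transpose ?a b \<circ> q) ` insert ?a ?S)))"
    using aS by (simp add: sum.insert)
  also have "(\<Sum>q\<in>{p. p permutes ?S}. f (card (orbit q ` insert ?a ?S)))
      = (\<Sum>q\<in>{p. p permutes ?S}. f (Suc (num_cycles N q)))"
    unfolding num_cycles_def
    by (rule sum.cong[OF refl], subst card_orbits_insert_fixed[OF finite_atLeastAtMost aS]) auto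
  also have "(\<Sum>b\<in>?S. \<Sum>q\<in>{p. p permutes ?S}. f (card (orbit (Transposition.transpose ?a b \<circ> q) ` insert ?a ?S)))
      = (\<Sum>b\<in>?S. \<Sum>q\<in>{p. p permutes ?S}. f (num_cycles N q))"
    unfolding num_cycles_def
  proof (rule sum.cong[OF refl], rule sum.cong[OF refl])
    fix b q assume b: "b \<in> ?S" and q: "q \<in> {p. p permutes ?S}"
    show "f (card (orbit (Transposition.transpose ?a b \<circ> q) ` insert ?a ?S)) = f (card (orbit q ` ?S))"
      using b q by (subst card_orbits_transpose[OF finite_atLeastAtMost aS]) auto
  qed
  also have "\<dots> = real N * (\<Sum>q\<in>{p. p permutes ?S}. f (num_cycles N q))" by simp
  finally show ?thesis by (simp add: sum.distrib sum_distrib_left)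
qed

definition EE :: "nat \<Rightarrow> nat \<Rightarrow> real" where
  "EE N l = measure_pmf.expectation (pmf_of_set {\<sigma>. \<sigma> permutes {1..N}})
           (\<lambda>\<sigma>. falling_pow (real (num_cycles N \<sigma>)) l)"

definition ss :: "nat \<Rightarrow> nat \<Rightarrow> real" where
  "ss N l = (\<Sum>\<sigma>\<in>{\<sigma>. \<sigma> permutes {1..N}}. falling_pow (real (num_cycles N \<sigma>)) l)"

lemma EE_ss: "EE N l = ss N l / fact N"
proof -
  have fin: "finite {\<sigma>. \<sigma> permutes {1..N}}" by (rule finite_permutations) simp
  have ne: "{\<sigma>. \<sigma> permutes {1..N}} \<noteq> {}" using permutes_id by blast
  have c: "card {\<sigma>. \<sigma> permutes {1..N}} = fact N" by (rule card_permutations) auto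
  show ?thesis unfolding EE_def ss_def
    using integral_pmf_of_set[OF ne fin] c by simp
qed

lemma ss_Suc_0: "ss (Suc N) 0 = real (Suc N) * ss N 0"
  unfolding ss_def using sum_perms_Suc[of "\<lambda>c. falling_pow (real c) 0" N]
  by (simp add: falling_pow_0 algebra_simps)

lemma ss_Suc_Suc: "ss (Suc N) (Suc k) = real (Suc N) * ss N (Suc k) + real (Suc k) * ss N k"
  unfolding ss_def using sum_perms_Suc[of "\<lambda>c. falling_pow (real c) (Suc k)" N]
  by (simp add: falling_pow_Suc_shift falling_pow_Suc_shift' sum.distrib sum_distrib_left algebra_simps)

lemma ss_0: "ss 0 l = (if l = 0 then 1 else 0)"
  unfolding ss_def num_cycles_def
  apply (cases l)
   apply (auto simp: falling_pow_0 falling_pow_zero_Suc)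
  done

lemma aux_field: "(p::real)>0 \<Longrightarrow> q>0 \<Longrightarrow> F>0 \<Longrightarrow> K>0 \<Longrightarrow> (p*a + q*b)/(p*F*(q*K)) = a/(F*(q*K)) + b/(F*K)/p"
  by (simp add: field_simps)

definition Ef :: "nat \<Rightarrow> real fps" where
  "Ef N = Abs_fps (\<lambda>l. EE N l / fact l)"

definition Pf :: "nat \<Rightarrow> real fps" where
  "Pf N = 1 + fps_const (1 / real (Suc N)) * fps_X"

lemma mult_Pf_nth:
  "(W * Pf N) $ n = W $ n + (if n = 0 then 0 else W $ (n - 1) / real (Suc N))"
proof -
  have "W * Pf N = W + fps_const (1 / real (Suc N)) * (fps_X * W)"
    unfolding Pf_def by (simp add: algebra_simps)
  then show ?thesis by simp
qed

lemma Ef_0: "Ef 0 = 1"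
  by (rule fps_ext) (simp add: Ef_def EE_ss ss_0)

lemma Ef_Suc: "Ef (Suc N) = Ef N * Pf N"
proof (rule fps_ext)
  fix n
  show "Ef (Suc N) $ n = (Ef N * Pf N) $ n"
  proof (cases n)
    case 0
    then show ?thesis by (simp add: mult_Pf_nth Ef_def EE_ss ss_Suc_0 Pf_def)
  next
    case (Suc k)
    have "Ef (Suc N) $ n = (real (Suc N) * ss N (Suc k) + real (Suc k) * ss N k) / (real (Suc N) * fact N * (real (Suc k) * fact k))"
      using Suc by (simp only: Ef_def fps_nth_Abs_fps EE_ss ss_Suc_Suc fact_Suc divide_divide_eq_left)
    also have "\<dots> = ss N (Suc k) / (fact N * (real (Suc k) * fact k)) + ss N k / (fact N * fact k) / real (Suc N)"
      by (rule aux_field) auto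
    also have "\<dots> = (Ef N * Pf N) $ n"
      using Suc by (simp only: mult_Pf_nth Ef_def fps_nth_Abs_fps EE_ss fact_Suc divide_divide_eq_left
          nat.simps if_False diff_Suc_1)
    finally show ?thesis .
  qed
qed

lemma fps_ode_unique:
  fixes A B G :: "real fps"
  assumes "fps_deriv A = G * A" "fps_deriv B = G * B" "A $ 0 = B $ 0"
  shows "A = B"
proof -
  have "A $ n = B $ n" for n
  proof (induction n rule: less_induct)
    case (less n)
    show ?case
    proof (cases n)
      case 0 then show ?thesis using assms by simp
    next
      case (Suc k)
      have "real (Suc k) * A $ Suc k = (G * A) $ k"
        using arg_cong[OF assms(1), of "\<lambda>F. F $ k"] by simp
      also have "\<dots> = (\<Sum>i=0..k. G $ i * A $ (k - i))" by (rule fps_mult_nth)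
      also have "\<dots> = (\<Sum>i=0..k. G $ i * B $ (k - i))"
        by (rule sum.cong) (use less Suc in auto)
      also have "\<dots> = (G * B) $ k" by (rule fps_mult_nth[symmetric])
      also have "\<dots> = real (Suc k) * B $ Suc k"
        using arg_cong[OF assms(2), of "\<lambda>F. F $ k"] by simp
      finally show ?thesis using Suc by simp
    qed
  qed
  then show ?thesis by (simp add: fps_eq_iff)
qed

definition Wf :: "nat \<Rightarrow> real fps" where
  "Wf N = Abs_fps (\<lambda>l. (-1) ^ l * Zpoly l (\<lambda>m. - zetaN N m) / fact l)"

definition Gf :: "nat \<Rightarrow> real fps" where
  "Gf N = Abs_fps (\<lambda>i. (-1) ^ i * zetaN N (Suc i))"

lemma Wf_ode: "fps_deriv (Wf N) = Gf N * Wf N"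
proof (rule fps_ext)
  fix k
  let ?g = "\<lambda>m. - zetaN N m"
  have "fps_deriv (Wf N) $ k = (-1) ^ Suc k * (real (Suc k) * (Zpoly (Suc k) ?g / fact (Suc k)))"
    by (simp add: Wf_def)
  also have "\<dots> = (-1) ^ Suc k * (\<Sum>i\<le>k. ?g (Suc i) * (Zpoly (k - i) ?g / fact (k - i)))"
    by (simp only: Zpoly_rec)
  also have "\<dots> = (\<Sum>i\<le>k. Gf N $ i * Wf N $ (k - i))"
    unfolding sum_distrib_left
  proof (rule sum.cong[OF refl])
    fix i assume "i \<in> {..k}"
    then obtain j where j: "k = i + j" by (metis atMost_iff le_add_diff_inverse)
    show "(-1) ^ Suc k * (?g (Suc i) * (Zpoly (k - i) ?g / fact (k - i))) = Gf N $ i * Wf N $ (k - i)"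
      by (simp add: Gf_def Wf_def j power_add)
  qed
  also have "\<dots> = (Gf N * Wf N) $ k" by (simp add: fps_mult_nth atLeast0AtMost)
  finally show "fps_deriv (Wf N) $ k = (Gf N * Wf N) $ k" .
qed

lemma Wf_nth_0: "Wf N $ 0 = 1" by (simp add: Wf_def Zpoly_0)

lemma zetaN_0: "zetaN 0 m = 0" by (simp add: zetaN_def)

lemma Wf_0: "Wf 0 = 1"
proof (rule fps_ode_unique[of _ 0])
  show "fps_deriv (Wf 0) = 0 * Wf 0" using Wf_ode[of 0]
    by (simp add: Gf_def zetaN_0 fps_zero_def)
qed (auto simp: Wf_nth_0)

lemma Wf_Suc: "Wf (Suc N) = Wf N * Pf N"
proof (rule fps_ode_unique[of _ "Gf (Suc N)"])
  show "fps_deriv (Wf (Suc N)) = Gf (Suc N) * Wf (Suc N)" by (rule Wf_ode)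
  define a where "a = 1 / real (Suc N)"
  define C where "C = Abs_fps (\<lambda>i. (-1) ^ i * a ^ Suc i)"
  have GS: "Gf (Suc N) = Gf N + C"
  proof (rule fps_ext)
    fix i
    have "zetaN (Suc N) (Suc i) = zetaN N (Suc i) + a ^ Suc i"
      unfolding zetaN_def a_def by (simp add: power_one_over)
    then show "Gf (Suc N) $ i = (Gf N + C) $ i"
      by (simp add: Gf_def C_def algebra_simps)
  qed
  have CP: "C * Pf N = fps_const a"
  proof (rule fps_ext)
    fix n
    show "(C * Pf N) $ n = fps_const a $ n"
      unfolding mult_Pf_nth by (cases n) (auto simp: C_def a_def)
  qed
  have dP: "fps_deriv (Pf N) = fps_const a" by (simp add: Pf_def a_def)
  have "fps_deriv (Wf N * Pf N) = Gf N * (Wf N * Pf N) + Wf N * fps_const a"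
    using Wf_ode[of N] dP by (simp add: algebra_simps)
  also have "\<dots> = Gf N * (Wf N * Pf N) + Wf N * (C * Pf N)" by (simp only: CP)
  also have "\<dots> = Gf (Suc N) * (Wf N * Pf N)" by (simp add: GS algebra_simps)
  finally show "fps_deriv (Wf N * Pf N) = Gf (Suc N) * (Wf N * Pf N)" .
qed (simp add: Wf_nth_0 Pf_def)

lemma Ef_Wf: "Ef N = Wf N"
  by (induction N) (simp_all add: Ef_0 Wf_0 Ef_Suc Wf_Suc)

theorem theorem3p1:
  fixes N l :: nat
  assumes "l \<ge> 1"
  shows "measure_pmf.expectation (pmf_of_set {\<sigma>. \<sigma> permutes {1..N}})
           (\<lambda>\<sigma>. falling_pow (real (num_cycles N \<sigma>)) l)
         = (-1) ^ l * Zpoly l (\<lambda>m. - zetaN N m)"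
proof -
  have "Ef N $ l = Wf N $ l" by (simp add: Ef_Wf)
  then have "EE N l / fact l = (-1) ^ l * Zpoly l (\<lambda>m. - zetaN N m) / fact l"
    by (simp add: Ef_def Wf_def)
  then show ?thesis unfolding EE_def by simp
qed

end
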